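(* For every finite bipartite separated graph $(E,C)$, the canonical partial action $\theta^{(E,C)}\colon\mathbb F(E^1)\curvearrowright\Omega(E,C)$ is relatively strongly topologically free.
   Context: Separated graph $(E,C)$: $E=(E^0,E^1,r,s)$, $C=\bigsqcup_vC_v$ with $C_v$ a partition of $r^{-1}(v)$ into non-empty sets. Finite bipartite: $E$ finite, $E^0=E^{0,0}\sqcup E^{0,1}$, $s(E^1)=E^{0,1}$, $r(E^1)=E^{0,0}$. $\mathbb F$ = free group on $E^1$; for $\xi\subseteq\mathbb F$, $\alpha\in\xi$, $\xi_\alpha=\{\sigma\in E^1\sqcup(E^1)^{-1}:\sigma\alpha\in\xi\}$. $\Omega(E,C)$ is the set of $\xi\subseteq\mathbb F$ with $1\in\xi$, right-convex (if a reduced word $e_m^{\varepsilon_m}\cdots e_1^{\varepsilon_1}\in\xi$ then $e_k^{\varepsilon_k}\cdots e_1^{\varepsilon_1}\in\xi$ for all $k<m$), and such that for every $\alpha\in\xi$ either $\xi_\alpha=s^{-1}(v)$ for some $v\in E^{0,1}$ or $\xi_\alpha=\{e_X^{-1}:X\in C_v\}$ for some $v\in E^{0,0}$ and $e_X\in X$; topology from $\{0,1\}^{\mathbb F}$. $\theta^{(E,C)}$ has domains $\Omega(E,C)_\alpha=\{\xi:\alpha^{-1}\in\xi\}$ and $\theta_\alpha(\xi)=\xi\alpha^{-1}$. For a partial action $\theta\colon G\curvearrowright\Omega$ with $\Omega_g$ the domain of $\theta_{g^{-1}}$: $\mathrm{Stab}(x)=\{g:x\in\Omega_{g^{-1}},\theta_g(x)=x\}$;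 $\theta$ is topologically free in $x$ if for every $1\ne g\in\mathrm{Stab}(x)$ and open $U\ni x$ there is $y\in U$ with $g\notin\mathrm{Stab}(y)$; strongly topologically free in $x$ if for all $1\ne g_1,\dots,g_n\in\mathrm{Stab}(x)$ and open $U\ni x$ there is $y\in U$ with $g_1,\dots,g_n\notin\mathrm{Stab}(y)$; $\Omega^{\mathrm{TF}}$ is the set of points of topological freeness; $\theta$ is relatively strongly topologically free if it is strongly topologically free in every point of $\Omega^{\mathrm{TF}}$. *)

theory Defs
  imports "HOL-Analysis.Analysis"
begin

text \<open>A letter is a pair (e, True) standing for e, or (e, False) standing for e^-1.
  A word [x1, ..., xm] stands for the product x1 x2 ... xm (x1 leftmost).\<close>

type_synonym 'e letter = "'e \<times> bool"
type_synonym 'e word = "'e letter list"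

definition linv :: "'e letter \<Rightarrow> 'e letter" where
  "linv x = (fst x, \<not> snd x)"

fun reduced :: "'e word \<Rightarrow> bool" where
  "reduced [] = True"
| "reduced [x] = True"
| "reduced (x # y # w) = (y \<noteq> linv x \<and> reduced (y # w))"

definition red_cons :: "'e letter \<Rightarrow> 'e word \<Rightarrow> 'e word" where
  "red_cons x w = (case w of [] \<Rightarrow> [x] | y # w' \<Rightarrow> (if y = linv x then w' else x # w))"

definition reduce :: "'e word \<Rightarrow> 'e word" where
  "reduce w = foldr red_cons w []"

definition wmult :: "'e word \<Rightarrow> 'e word \<Rightarrow> 'e word" where
  "wmult a b = reduce (a @ b)"

definition winv :: "'e word \<Rightarrow> 'e word" where
  "winv w = rev (map linv w)"

definition free_group :: "'e set \<Rightarrow> 'e word set" where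
  "free_group E1 = {w. reduced w \<and> set (map fst w) \<subseteq> E1}"

definition letters :: "'e set \<Rightarrow> 'e letter set" where
  "letters E1 = E1 \<times> UNIV"

definition separated_graph ::
  "'v set \<Rightarrow> 'e set \<Rightarrow> ('e \<Rightarrow> 'v) \<Rightarrow> ('e \<Rightarrow> 'v) \<Rightarrow> ('v \<Rightarrow> 'e set set) \<Rightarrow> bool" where
  "separated_graph E0 E1 r s C \<longleftrightarrow>
     r ` E1 \<subseteq> E0 \<and> s ` E1 \<subseteq> E0 \<and>
     (\<forall>v. v \<notin> E0 \<longrightarrow> C v = {}) \<and>
     (\<forall>v\<in>E0. (\<forall>X\<in>C v. X \<noteq> {}) \<and> \<Union>(C v) = {e\<in>E1. r e = v} \<and>
        (\<forall>X\<in>C v. \<forall>Y\<in>C v. X \<noteq> Y \<longrightarrow> X \<inter> Y = {}))"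

definition finite_bipartite_sep_graph ::
  "'v set \<Rightarrow> 'v set \<Rightarrow> 'v set \<Rightarrow> 'e set \<Rightarrow> ('e \<Rightarrow> 'v) \<Rightarrow> ('e \<Rightarrow> 'v) \<Rightarrow> ('v \<Rightarrow> 'e set set) \<Rightarrow> bool" where
  "finite_bipartite_sep_graph E0 E00 E01 E1 r s C \<longleftrightarrow>
     separated_graph E0 E1 r s C \<and> finite E0 \<and> finite E1 \<and>
     E0 = E00 \<union> E01 \<and> E00 \<inter> E01 = {} \<and> s ` E1 = E01 \<and> r ` E1 = E00"

definition local_config :: "'e set \<Rightarrow> 'e word set \<Rightarrow> 'e word \<Rightarrow> 'e letter set" where
  "local_config E1 \<xi> \<alpha> = {\<sigma> \<in> letters E1. wmult [\<sigma>] \<alpha> \<in> \<xi>}"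

definition Omega ::
  "'v set \<Rightarrow> 'v set \<Rightarrow> 'e set \<Rightarrow> ('e \<Rightarrow> 'v) \<Rightarrow> ('e \<Rightarrow> 'v) \<Rightarrow> ('v \<Rightarrow> 'e set set) \<Rightarrow> 'e word set set" where
  "Omega E00 E01 E1 r s C = {\<xi>. \<xi> \<subseteq> free_group E1 \<and> [] \<in> \<xi> \<and>
     (\<forall>w\<in>\<xi>. \<forall>k. drop k w \<in> \<xi>) \<and>
     (\<forall>\<alpha>\<in>\<xi>. (\<exists>v\<in>E01. local_config E1 \<xi> \<alpha> = {(e, True) | e. e \<in> E1 \<and> s e = v}) \<or>
              (\<exists>v\<in>E00. \<exists>ch. (\<forall>X\<in>C v. ch X \<in> X) \<and>
                   local_config E1 \<xi> \<alpha> = (\<lambda>X. (ch X, False)) ` C v))}"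

definition Omega_top ::
  "'v set \<Rightarrow> 'v set \<Rightarrow> 'e set \<Rightarrow> ('e \<Rightarrow> 'v) \<Rightarrow> ('e \<Rightarrow> 'v) \<Rightarrow> ('v \<Rightarrow> 'e set set) \<Rightarrow> 'e word set topology" where
  "Omega_top E00 E01 E1 r s C =
     pullback_topology (Omega E00 E01 E1 r s C) (\<lambda>\<xi>. restrict (\<lambda>w. w \<in> \<xi>) (free_group E1))
       (product_topology (\<lambda>_. discrete_topology (UNIV :: bool set)) (free_group E1))"

text \<open>theta_alpha has domain {xi. alpha in xi} (= Omega_{alpha^-1}) and sends xi to xi alpha^-1.\<close>
definition theta_dom ::
  "'v set \<Rightarrow> 'v set \<Rightarrow> 'e set \<Rightarrow> ('e \<Rightarrow> 'v) \<Rightarrow> ('e \<Rightarrow> 'v) \<Rightarrow> ('v \<Rightarrow> 'e set set) \<Rightarrow> 'e word \<Rightarrow> 'e word set set" where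
  "theta_dom E00 E01 E1 r s C \<alpha> = {\<xi> \<in> Omega E00 E01 E1 r s C. \<alpha> \<in> \<xi>}"

definition theta :: "'e word \<Rightarrow> 'e word set \<Rightarrow> 'e word set" where
  "theta \<alpha> \<xi> = (\<lambda>\<beta>. wmult \<beta> (winv \<alpha>)) ` \<xi>"

text \<open>A partial action of the group with elements G and unit one on a space with topology T,
  given by maps act g with domain dm g (i.e. dm g is Omega_{g^-1}).\<close>

definition Stab :: "('g \<Rightarrow> 'x set) \<Rightarrow> ('g \<Rightarrow> 'x \<Rightarrow> 'x) \<Rightarrow> 'g set \<Rightarrow> 'x \<Rightarrow> 'g set" where
  "Stab dm act G x = {g \<in> G. x \<in> dm g \<and> act g x = x}"

definition top_free_at ::
  "'x topology \<Rightarrow> ('g \<Rightarrow> 'x set) \<Rightarrow> ('g \<Rightarrow> 'x \<Rightarrow> 'x) \<Rightarrow> 'g set \<Rightarrow> 'g \<Rightarrow> 'x \<Rightarrow> bool" where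
  "top_free_at T dm act G one x \<longleftrightarrow>
     (\<forall>g \<in> Stab dm act G x. g \<noteq> one \<longrightarrow>
        (\<forall>U. openin T U \<and> x \<in> U \<longrightarrow> (\<exists>y\<in>U. g \<notin> Stab dm act G y)))"

definition strongly_top_free_at ::
  "'x topology \<Rightarrow> ('g \<Rightarrow> 'x set) \<Rightarrow> ('g \<Rightarrow> 'x \<Rightarrow> 'x) \<Rightarrow> 'g set \<Rightarrow> 'g \<Rightarrow> 'x \<Rightarrow> bool" where
  "strongly_top_free_at T dm act G one x \<longleftrightarrow>
     (\<forall>gs. finite gs \<and> gs \<subseteq> Stab dm act G x \<and> one \<notin> gs \<longrightarrow>
        (\<forall>U. openin T U \<and> x \<in> U \<longrightarrow> (\<exists>y\<in>U. gs \<inter> Stab dm act G y = {})))"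

definition TF_points ::
  "'x topology \<Rightarrow> ('g \<Rightarrow> 'x set) \<Rightarrow> ('g \<Rightarrow> 'x \<Rightarrow> 'x) \<Rightarrow> 'g set \<Rightarrow> 'g \<Rightarrow> 'x set" where
  "TF_points T dm act G one = {x \<in> topspace T. top_free_at T dm act G one x}"

definition rel_strongly_top_free ::
  "'x topology \<Rightarrow> ('g \<Rightarrow> 'x set) \<Rightarrow> ('g \<Rightarrow> 'x \<Rightarrow> 'x) \<Rightarrow> 'g set \<Rightarrow> 'g \<Rightarrow> bool" where
  "rel_strongly_top_free T dm act G one \<longleftrightarrow>
     (\<forall>x \<in> TF_points T dm act G one. strongly_top_free_at T dm act G one x)"

end

theory Submission
  imports Defs
begin


lemma linv_linv[simp]: "linv (linv x) = x" by (simp add: linv_def)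
lemma linv_neq[simp]: "linv x \<noteq> x" by (cases x) (simp add: linv_def)

lemma reduce_Cons: "reduce (x # w) = red_cons x (reduce w)"
  by (simp add: reduce_def)
lemma reduce_Nil[simp]: "reduce [] = []" by (simp add: reduce_def)

lemma red_cons_cases: "red_cons x w = x # w \<or> (w \<noteq> [] \<and> red_cons x w = tl w)"
  by (cases w) (auto simp: red_cons_def)

lemma reduced_Cons: "reduced (x # w) \<longleftrightarrow> reduced w \<and> (w = [] \<or> hd w \<noteq> linv x)"
  by (cases w) auto

lemma reduced_tl: "reduced w \<Longrightarrow> reduced (tl w)"
  by (cases w) (auto simp: reduced_Cons)

lemma reduced_drop: "reduced w \<Longrightarrow> reduced (drop k w)"
proof (induction k arbitrary: w)
  case 0 then show ?case by simp
next
  case (Suc k) then show ?case by (cases w) (auto simp: reduced_Cons)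
qed

lemma reduced_red_cons: "reduced w \<Longrightarrow> reduced (red_cons x w)"
  by (cases w) (auto simp: red_cons_def reduced_Cons)

lemma reduced_reduce: "reduced (reduce w)"
  by (induction w) (auto simp: reduce_Cons reduced_red_cons)

lemma reduced_foldr: "reduced c \<Longrightarrow> reduced (foldr red_cons w c)"
  by (induction w) (auto simp: reduced_red_cons)

lemma red_cons_id: "reduced (x # w) \<Longrightarrow> red_cons x w = x # w"
  by (cases w) (auto simp: red_cons_def)

lemma reduce_reduced: "reduced w \<Longrightarrow> reduce w = w"
  by (induction w) (auto simp: reduce_Cons reduced_Cons red_cons_id)

lemma red_cons_cancel: "reduced c \<Longrightarrow> red_cons x (red_cons (linv x) c) = c"
  by (cases c) (auto simp: red_cons_def reduced_Cons split: list.splits)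

lemma foldr_red_cons: "reduced c \<Longrightarrow>
  foldr red_cons (red_cons x w) c = red_cons x (foldr red_cons w c)"
proof (cases "w \<noteq> [] \<and> hd w = linv x")
  case True
  assume c: "reduced c"
  then obtain w' where w: "w = linv x # w'" using True by (cases w) auto
  then show ?thesis using red_cons_cancel[OF reduced_foldr[OF c]]
    by (simp add: red_cons_def)
next
  case False
  then have "red_cons x w = x # w" by (cases w) (auto simp: red_cons_def)
  then show ?thesis by simp
qed

lemma foldr_reduce: "reduced c \<Longrightarrow> foldr red_cons (reduce a) c = foldr red_cons a c"
  by (induction a) (auto simp: reduce_Cons foldr_red_cons)

lemma reduce_append: "reduce (a @ b) = foldr red_cons a (reduce b)"
  by (simp add: reduce_def)

lemma reduce_left: "reduce (reduce a @ b) = reduce (a @ b)"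
  by (simp add: reduce_append foldr_reduce reduced_reduce)

lemma reduce_right: "reduce (a @ reduce b) = reduce (a @ b)"
  by (simp add: reduce_append reduce_reduced reduced_reduce)

lemma winv_Nil[simp]: "winv [] = []" by (simp add: winv_def)
lemma winv_Cons: "winv (x # w) = winv w @ [linv x]" by (simp add: winv_def)
lemma winv_append: "winv (a @ b) = winv b @ winv a" by (simp add: winv_def)
lemma winv_winv[simp]: "winv (winv a) = a" by (induction a) (simp_all add: winv_def)
lemma length_winv[simp]: "length (winv a) = length a" by (simp add: winv_def)
lemma winv_eq_Nil[simp]: "winv a = [] \<longleftrightarrow> a = []" by (simp add: winv_def)

lemma reduced_append: "reduced (a @ b) \<longleftrightarrow> reduced a \<and> reduced b \<and> (a = [] \<or> b = [] \<or> hd b \<noteq> linv (last a))"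
proof (induction a)
  case Nil then show ?case by simp
next
  case (Cons x a) then show ?case
    by (cases a; cases b) (auto simp: reduced_Cons)
qed

lemma linv_eq: "linv x = y \<longleftrightarrow> x = linv y" by (auto simp: linv_def)

lemma reduced_winv: "reduced w \<Longrightarrow> reduced (winv w)"
proof (induction w)
  case Nil then show ?case by simp
next
  case (Cons x w)
  then show ?case
    by (auto simp: winv_Cons reduced_append reduced_Cons winv_def last_rev hd_map linv_eq)
qed

lemma set_winv: "set (map fst (winv w)) = set (map fst w)"
  by (force simp: winv_def linv_def)

lemma reduce_inv: "reduce (w @ winv w) = []"
proof (induction w)
  case Nil then show ?case by simp
next
  case (Cons x w)
  have "reduce (w @ winv w @ [linv x]) = reduce (reduce (w @ winv w) @ [linv x])"
    by (simp add: reduce_left)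
  also have "\<dots> = [linv x]" using Cons by (simp add: reduce_Cons red_cons_def)
  finally show ?case by (simp add: winv_Cons reduce_Cons red_cons_def)
qed

lemma reduce_inv': "reduce (winv w @ w) = []"
  using reduce_inv[of "winv w"] by simp

lemma reduce_cancel_mid: "reduce (a @ p @ winv p @ b) = reduce (a @ b)"
proof -
  have "reduce (p @ winv p @ b) = reduce b"
    using reduce_left[of "p @ winv p" b] by (simp add: reduce_inv)
  then show ?thesis
    by (metis reduce_right)
qed

lemma length_red_cons: "length (red_cons x w) \<le> Suc (length w)"
  by (cases w) (auto simp: red_cons_def)

lemma length_reduce: "length (reduce w) \<le> length w"
proof (induction w)
  case Nil then show ?case by simp
next
  case (Cons x w)
  have "length (reduce (x # w)) \<le> Suc (length (reduce w))"
    unfolding reduce_Cons by (rule length_red_cons)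
  then show ?case using Cons by simp
qed

lemma wmult_cancel: "reduced x \<Longrightarrow> wmult (wmult x p) (winv p) = x"
  unfolding wmult_def
  using reduce_cancel_mid[of x p "[]"] by (simp add: reduce_left reduce_reduced)

lemma decomp_foldr: "reduced b \<Longrightarrow> reduced a \<Longrightarrow>
   \<exists>a' p q. a = a' @ p \<and> b = winv p @ q \<and> foldr red_cons a b = a' @ q"
proof (induction a)
  case Nil then show ?case by (intro exI[of _ "[]"] exI[of _ "[]"] exI[of _ b]) simp
next
  case (Cons x a)
  then have ra: "reduced a" by (simp add: reduced_Cons)
  from Cons.IH[OF Cons.prems(1) ra] obtain a' p q where
    h: "a = a' @ p" "b = winv p @ q" "foldr red_cons a b = a' @ q" by blast
  show ?case
  proof (cases a')
    case (Cons y a'')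
    then have "y \<noteq> linv x" using Cons.prems(2) h(1) by (simp add: reduced_Cons)
    then have "red_cons x (a' @ q) = x # a' @ q"
      using Cons by (simp add: red_cons_def linv_eq)
    then show ?thesis using h by (intro exI[of _ "x # a'"] exI[of _ p] exI[of _ q]) simp
  next
    case Nil
    show ?thesis
    proof (cases "q \<noteq> [] \<and> hd q = linv x")
      case True
      then obtain q' where q: "q = linv x # q'" by (cases q) auto
      have "foldr red_cons (x # a) b = q'" using h Nil q by (simp add: red_cons_def)
      moreover have "b = winv (x # p) @ q'" using h q by (simp add: winv_Cons)
      ultimately show ?thesis using h Nil
        by (intro exI[of _ "[]"] exI[of _ "x # p"] exI[of _ q']) simp
    next
      case False
      then have "red_cons x q = x # q" by (cases q) (auto simp: red_cons_def)
      then show ?thesis using h Nil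
        by (intro exI[of _ "[x]"] exI[of _ p] exI[of _ q]) simp
    qed
  qed
qed

lemma decomp: "reduced a \<Longrightarrow> reduced b \<Longrightarrow>
   \<exists>a' p q. a = a' @ p \<and> b = winv p @ q \<and> wmult a b = a' @ q"
  using decomp_foldr[of b a] by (simp add: wmult_def reduce_append reduce_reduced)



lemma drop_suffix: "k \<le> length B \<Longrightarrow> drop (length (g @ B) - k) (g @ B) = drop (length B - k) B"
  by (simp add: drop_append)

lemma comb:
  assumes rx: "reduced x" and rh: "reduced h" and hn: "h \<noteq> []"
    and x: "x = g1 @ B" and xh: "wmult x h = g2 @ B" and hB: "length h < length B"
    and l1: "length x \<le> length (wmult x h)" and l2: "length x \<le> length (wmult x (winv h))"
  shows False
proof -
  obtain x' p q where d: "x = x' @ p" "h = winv p @ q" "wmult x h = x' @ q"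
    using decomp[OF rx rh] by blast
  have lq: "length p \<le> length q" using l1 d by simp
  have qB: "length q \<le> length B" using hB d by simp
  have "drop (length x - length q) x = drop (length B - length q) B"
    using drop_suffix[OF qB, of g1] x by simp
  also have "\<dots> = drop (length (wmult x h) - length q) (wmult x h)"
    using drop_suffix[OF qB, of g2] xh by simp
  also have "\<dots> = q" using d by simp
  finally have s: "drop (length x - length q) x = q" .
  define t where "t = length q - length p"
  have "length x' + length p = length g1 + length B" using d(1) x by (metis length_append)
  then have tx: "t \<le> length x'" using d(2) hB t_def by simp
  define r where "r = drop (length x' - t) x'"
  define x'' where "x'' = take (length x' - t) x'"
  have x': "x' = x'' @ r" by (simp add: r_def x''_def)
  have lr: "length r = t" using tx by (simp add: r_def)
  have "drop (length x - length q) x = r @ p"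
    using d(1) tx lq by (simp add: r_def t_def drop_append)
  with s have q: "q = r @ p" by simp
  show False
  proof (cases "t = 0")
    case True
    then have "r = []" using lr by simp
    then have "h = winv p @ p" using d q by simp
    then have "reduce h = []" by (simp add: reduce_inv')
    with rh hn show False by (simp add: reduce_reduced)
  next
    case False
    have "winv h = winv p @ winv r @ p" using d q by (simp add: winv_append)
    then have "wmult x (winv h) = reduce ((x'' @ r) @ p @ winv p @ (winv r @ p))"
      using d x' by (simp add: wmult_def)
    also have "\<dots> = reduce ((x'' @ r) @ winv r @ p)" by (rule reduce_cancel_mid)
    also have "\<dots> = reduce (x'' @ r @ winv r @ p)" by simp
    also have "\<dots> = reduce (x'' @ p)" by (rule reduce_cancel_mid)
    finally have "length (wmult x (winv h)) \<le> length (x'' @ p)"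
      using length_reduce by metis
    then show False using l2 d x' lr False by simp
  qed
qed



definition cone :: "'e word \<Rightarrow> 'e word set" where
  "cone B = {w. \<exists>g. w = g @ B}"

lemma wmult_single: "reduced a \<Longrightarrow> wmult [x] a = red_cons x a"
  by (simp add: wmult_def reduce_Cons reduce_reduced)

lemma Omega_D:
  assumes "\<xi> \<in> Omega E00 E01 E1 r s C"
  shows "\<xi> \<subseteq> free_group E1" "[] \<in> \<xi>" "\<And>w k. w \<in> \<xi> \<Longrightarrow> drop k w \<in> \<xi>"
  using assms by (auto simp: Omega_def)

lemma splice:
  assumes xi: "\<xi> \<in> Omega E00 E01 E1 r s C" and y: "y \<in> Omega E00 E01 E1 r s C"
    and B: "B \<in> \<xi>" "B \<in> y"
  shows "(\<xi> - cone B) \<union> (y \<inter> cone B) \<in> Omega E00 E01 E1 r s C"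
proof -
  define y' where "y' = (\<xi> - cone B) \<union> (y \<inter> cone B)"
  have mem: "w \<in> y' \<longleftrightarrow> (if w \<in> cone B then w \<in> y else w \<in> \<xi>)" for w
    by (auto simp: y'_def)
  have sub: "y' \<subseteq> free_group E1" using Omega_D(1)[OF xi] Omega_D(1)[OF y] by (auto simp: y'_def)
  have nil: "[] \<in> y'" using Omega_D(2)[OF xi] Omega_D(2)[OF y] by (auto simp: mem)
  have tlB: "tl B \<in> \<xi>" "tl B \<in> y" using Omega_D(3)[OF xi B(1), of 1] Omega_D(3)[OF y B(2), of 1]
    by (auto simp: drop_Suc)
  have drp: "drop k w \<in> y'" if w: "w \<in> y'" for w k
  proof (cases "w \<in> cone B")
    case True
    then obtain g where g: "w = g @ B" by (auto simp: cone_def)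
    have wy: "w \<in> y" using w True by (simp add: mem)
    show ?thesis
    proof (cases "k \<le> length g")
      case True
      then have "drop k w \<in> cone B" using g by (auto simp: cone_def)
      then show ?thesis using Omega_D(3)[OF y wy] by (simp add: mem)
    next
      case False
      then have "drop k w = drop (k - length g) B" using g by simp
      then have "drop k w \<in> \<xi>" "drop k w \<in> y" using Omega_D(3)[OF xi B(1)] Omega_D(3)[OF y B(2)]
        by auto
      then show ?thesis by (simp add: mem)
    qed
  next
    case False
    have wx: "w \<in> \<xi>" using w False by (simp add: mem)
    have "drop k w \<notin> cone B"
    proof
      assume "drop k w \<in> cone B"
      then obtain g where "drop k w = g @ B" by (auto simp: cone_def)
      then have "w = (take k w @ g) @ B" by (metis append_assoc append_take_drop_id)
      then show False using False unfolding cone_def by blast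
    qed
    then show ?thesis using Omega_D(3)[OF xi wx] by (simp add: mem)
  qed
  have lc: "\<exists>S \<in> {\<xi>, y}. \<alpha> \<in> S \<and> local_config E1 y' \<alpha> = local_config E1 S \<alpha>" if a: "\<alpha> \<in> y'" for \<alpha>
  proof -
    have ra: "reduced \<alpha>" using sub a by (auto simp: free_group_def)
    show ?thesis
    proof (cases "\<alpha> \<in> cone B")
      case True
      then obtain g where g: "\<alpha> = g @ B" by (auto simp: cone_def)
      have ay: "\<alpha> \<in> y" using a True by (simp add: mem)
      have "red_cons x \<alpha> \<in> y' \<longleftrightarrow> red_cons x \<alpha> \<in> y" for x
      proof (cases "red_cons x \<alpha> \<in> cone B")
        case True then show ?thesis by (simp add: mem)
      next
        case False
        have "x # \<alpha> \<in> cone B" using g by (auto simp: cone_def intro: exI[of _ "x # g"])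
        then have "red_cons x \<alpha> = tl \<alpha>" using False red_cons_cases[of x \<alpha>] by metis
        moreover have "g = []"
        proof (rule ccontr)
          assume "g \<noteq> []"
          then have "tl \<alpha> = tl g @ B" using g by simp
          then show False using False \<open>red_cons x \<alpha> = tl \<alpha>\<close> by (auto simp: cone_def)
        qed
        ultimately have "red_cons x \<alpha> = tl B" using g by simp
        then show ?thesis using tlB by (simp add: mem)
      qed
      then have "local_config E1 y' \<alpha> = local_config E1 y \<alpha>"
        by (simp add: local_config_def wmult_single[OF ra])
      then show ?thesis using ay by blast
    next
      case False
      have ax: "\<alpha> \<in> \<xi>" using a False by (simp add: mem)
      have "red_cons x \<alpha> \<in> y' \<longleftrightarrow> red_cons x \<alpha> \<in> \<xi>" for x
      proof (cases "red_cons x \<alpha> \<in> cone B")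
        case False then show ?thesis by (simp add: mem)
      next
        case True
        then obtain g where g: "red_cons x \<alpha> = g @ B" by (auto simp: cone_def)
        show ?thesis
        proof (cases "red_cons x \<alpha> = x # \<alpha>")
          case True
          show ?thesis
          proof (cases g)
            case Nil
            then show ?thesis using g B by (simp add: mem)
          next
            case (Cons z g')
            then have "\<alpha> = g' @ B" using g True by simp
            then show ?thesis using \<open>\<alpha> \<notin> cone B\<close> by (auto simp: cone_def)
          qed
        next
          case False
          then have "\<alpha> \<noteq> []" "red_cons x \<alpha> = tl \<alpha>" using red_cons_cases[of x \<alpha>] by auto
          then have "\<alpha> = (hd \<alpha> # g) @ B" using g by simp
          then show ?thesis using \<open>\<alpha> \<notin> cone B\<close> by (auto simp: cone_def simp del: append_Cons)
        qed
      qed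
      then have "local_config E1 y' \<alpha> = local_config E1 \<xi> \<alpha>"
        by (simp add: local_config_def wmult_single[OF ra])
      then show ?thesis using ax by blast
    qed
  qed
  have cond: "\<forall>\<alpha>\<in>S. (\<exists>v\<in>E01. local_config E1 S \<alpha> = {(e, True) | e. e \<in> E1 \<and> s e = v}) \<or>
              (\<exists>v\<in>E00. \<exists>ch. (\<forall>X\<in>C v. ch X \<in> X) \<and>
                   local_config E1 S \<alpha> = (\<lambda>X. (ch X, False)) ` C v)" if "S \<in> {\<xi>, y}" for S
    using that xi y by (auto simp: Omega_def)
  have "\<forall>\<alpha>\<in>y'. (\<exists>v\<in>E01. local_config E1 y' \<alpha> = {(e, True) | e. e \<in> E1 \<and> s e = v}) \<or>
              (\<exists>v\<in>E00. \<exists>ch. (\<forall>X\<in>C v. ch X \<in> X) \<and>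
                   local_config E1 y' \<alpha> = (\<lambda>X. (ch X, False)) ` C v)"
  proof
    fix \<alpha> assume "\<alpha> \<in> y'"
    from lc[OF this] obtain S where S: "S \<in> {\<xi>, y}" "\<alpha> \<in> S" "local_config E1 y' \<alpha> = local_config E1 S \<alpha>"
      by blast
    show "(\<exists>v\<in>E01. local_config E1 y' \<alpha> = {(e, True) | e. e \<in> E1 \<and> s e = v}) \<or>
              (\<exists>v\<in>E00. \<exists>ch. (\<forall>X\<in>C v. ch X \<in> X) \<and>
                   local_config E1 y' \<alpha> = (\<lambda>X. (ch X, False)) ` C v)"
      using cond[OF S(1)] S(2,3) by simp
  qed
  then show ?thesis using sub nil drp unfolding y'_def[symmetric] by (simp add: Omega_def)
qed



lemma theta_closed:
  assumes rg: "reduced g" and sub: "S \<subseteq> free_group E1" and th: "theta g S = S" and x: "x \<in> S"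
  shows "wmult x (winv g) \<in> S" "wmult x g \<in> S"
proof -
  show "wmult x (winv g) \<in> S" using x th by (auto simp: theta_def)
  from x th obtain z where z: "z \<in> S" "x = wmult z (winv g)" by (auto simp: theta_def)
  have "reduced z" using z sub by (auto simp: free_group_def)
  then have "wmult x g = z" using z wmult_cancel[of z "winv g"] by simp
  then show "wmult x g \<in> S" using z by simp
qed

lemma no_common:
  assumes sub1: "S1 \<subseteq> free_group E1" and sub2: "S2 \<subseteq> free_group E1"
    and c1: "\<And>x. x \<in> S1 \<Longrightarrow> wmult x (winv g) \<in> S1 \<and> wmult x g \<in> S1"
    and c2: "\<And>x. x \<in> S2 \<Longrightarrow> wmult x (winv g) \<in> S2 \<and> wmult x g \<in> S2"
    and Dc: "(S1 - S2) \<union> (S2 - S1) \<subseteq> cone B" and Dn: "(S1 - S2) \<union> (S2 - S1) \<noteq> {}"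
    and rg: "reduced g" and gn: "g \<noteq> []" and gB: "length g < length B"
  shows False
proof -
  define D where "D = (S1 - S2) \<union> (S2 - S1)"
  obtain x0 where "x0 \<in> D" using Dn by (auto simp: D_def)
  then obtain x where x: "x \<in> D" and xmin: "\<And>z. z \<in> D \<Longrightarrow> length x \<le> length z"
    using ex_has_least_nat[of "\<lambda>z. z \<in> D" x0 length] by blast
  have red: "reduced z" if "z \<in> D" for z using that sub1 sub2 by (auto simp: D_def free_group_def)
  have rx: "reduced x" using red x .
  have c1': "wmult (wmult z (winv g)) g = z" "wmult (wmult z g) (winv g) = z" if "reduced z" for z
    using wmult_cancel[OF that, of "winv g"] wmult_cancel[OF that, of g] by auto
  have xh: "wmult x (winv g) \<in> D" and xg: "wmult x g \<in> D"
    using x c1 c2 c1'[OF rx] unfolding D_def by (metis DiffE DiffI UnE UnI1 UnI2)+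
  have rh: "reduced (winv g)" using rg by (rule reduced_winv)
  obtain g1 where g1: "x = g1 @ B" using x Dc by (auto simp: D_def cone_def)
  obtain g2 where g2: "wmult x (winv g) = g2 @ B" using xh Dc by (auto simp: D_def cone_def)
  show False
    using comb[OF rx rh _ g1 g2] gn gB xmin[OF xh] xmin[OF xg] by simp
qed



theorem proposition7:
  fixes E0 E00 E01 :: "'v set" and E1 :: "'e set" and r s :: "'e \<Rightarrow> 'v"
    and C :: "'v \<Rightarrow> 'e set set"
  assumes "finite_bipartite_sep_graph E0 E00 E01 E1 r s C"
  shows "rel_strongly_top_free (Omega_top E00 E01 E1 r s C)
           (theta_dom E00 E01 E1 r s C) theta (free_group E1) []"
proof -
  from assms have finE1: "finite E1" by (simp add: finite_bipartite_sep_graph_def)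
  define Om where "Om = Omega E00 E01 E1 r s C"
  define I where "I = free_group E1"
  define f where "f = (\<lambda>\<xi>::'e word set. restrict (\<lambda>w. w \<in> \<xi>) I)"
  define PT where "PT = product_topology (\<lambda>_. discrete_topology (UNIV::bool set)) I"
  define dm where "dm = theta_dom E00 E01 E1 r s C"
  have T: "Omega_top E00 E01 E1 r s C = pullback_topology Om f PT"
    by (simp add: Omega_top_def f_def Om_def I_def PT_def)
  have topsp: "topspace (Omega_top E00 E01 E1 r s C) = Om"
    by (auto simp: T topspace_pullback_topology PT_def f_def)
  have fval: "i \<in> I \<Longrightarrow> f y i = (i \<in> y)" for y i by (simp add: f_def)
  have fext: "f y \<in> extensional I" for y by (simp add: f_def)
  have OmI: "y \<in> Om \<Longrightarrow> y \<subseteq> I" for y using Omega_D(1)[of y E00 E01 E1 r s C] by (simp add: Om_def I_def)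
  show ?thesis unfolding rel_strongly_top_free_def dm_def[symmetric]
  proof
    fix \<xi> assume "\<xi> \<in> TF_points (Omega_top E00 E01 E1 r s C) dm theta (free_group E1) []"
    then have xi: "\<xi> \<in> Om" and tf: "top_free_at (Omega_top E00 E01 E1 r s C) dm theta I [] \<xi>"
      by (auto simp: TF_points_def topsp I_def)
    show "strongly_top_free_at (Omega_top E00 E01 E1 r s C) dm theta (free_group E1) [] \<xi>"
      unfolding strongly_top_free_at_def I_def[symmetric]
    proof (intro allI impI)
      fix gs U
      assume gs: "finite gs \<and> gs \<subseteq> Stab dm theta I \<xi> \<and> [] \<notin> gs"
        and U: "openin (Omega_top E00 E01 E1 r s C) U \<and> \<xi> \<in> U"
      show "\<exists>y\<in>U. gs \<inter> Stab dm theta I y = {}"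
      proof (cases "gs = {}")
        case True then show ?thesis using U by auto
      next
        case False
        then obtain g0 where g0: "g0 \<in> gs" by auto
        obtain W where W: "openin PT W" "U = f -` W \<inter> Om"
          using U unfolding T openin_pullback_topology by metis
        have "f \<xi> \<in> W" using U W by auto
        then obtain Ub where Ub: "finite {i\<in>I. Ub i \<noteq> UNIV}" "f \<xi> \<in> PiE I Ub" "PiE I Ub \<subseteq> W"
          using W(1) unfolding PT_def openin_product_topology_alt by auto
        define M where "M = Suc (Max (length ` gs))"
        have gM: "length g < M" if "g \<in> gs" for g
          using that gs by (simp add: M_def le_imp_less_Suc)
        define F where "F = {i\<in>I. Ub i \<noteq> UNIV} \<union> {w\<in>I. length w \<le> M}"
        have "{w\<in>I. length w \<le> M} \<subseteq> {xs. set xs \<subseteq> E1 \<times> (UNIV::bool set) \<and> length xs \<le> M}"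
          by (force simp: I_def free_group_def)
        moreover have "finite {xs. set xs \<subseteq> E1 \<times> (UNIV::bool set) \<and> length xs \<le> M}"
          using finE1 by (intro finite_lists_length_le) simp
        ultimately have finF: "finite F" using Ub(1) unfolding F_def
          by (meson finite_Un finite_subset)
        define V where "V = {y \<in> Om. \<forall>w\<in>F. (w \<in> y) = (w \<in> \<xi>)}"
        have VU: "V \<subseteq> U"
        proof
          fix y assume y: "y \<in> V"
          have "f y \<in> PiE I Ub"
          proof (rule PiE_I)
            fix i assume i: "i \<in> I"
            show "f y i \<in> Ub i"
            proof (cases "Ub i = UNIV")
              case False
              then have "i \<in> F" using i by (simp add: F_def)
              then have "f y i = f \<xi> i" using y i by (simp add: V_def fval)
              then show ?thesis using Ub(2) i by (auto simp: PiE_def)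
            qed simp
          next
            fix i assume "i \<notin> I" then show "f y i = undefined" by (simp add: f_def)
          qed
          then show "y \<in> U" using y Ub(3) W(2) by (auto simp: V_def)
        qed
        define Uc where "Uc = (\<lambda>i. if i \<in> F then {i \<in> \<xi>} else (UNIV::bool set))"
        have "openin PT (PiE I Uc)"
          unfolding PT_def openin_product_topology_alt
        proof (intro ballI exI[of _ Uc] conjI)
          show "finite {i \<in> I. Uc i \<noteq> topspace (discrete_topology UNIV)}"
            by (rule finite_subset[OF _ finF]) (auto simp: Uc_def)
        qed auto
        moreover have "V = f -` PiE I Uc \<inter> Om"
        proof -
          have "f y \<in> PiE I Uc \<longleftrightarrow> (\<forall>w\<in>F. (w \<in> y) = (w \<in> \<xi>))" for y
          proof -
            have "F \<subseteq> I" by (auto simp: F_def)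
            then show ?thesis using fext[of y]
              by (auto simp: PiE_def Pi_def Uc_def fval)
          qed
          then show ?thesis by (auto simp: V_def)
        qed
        ultimately have Vopen: "openin (Omega_top E00 E01 E1 r s C) V"
          unfolding T openin_pullback_topology by blast
        have xiV: "\<xi> \<in> V" using xi by (simp add: V_def)
        have g0S: "g0 \<in> Stab dm theta I \<xi>" "g0 \<noteq> []" using g0 gs by auto
        obtain y where y: "y \<in> V" "g0 \<notin> Stab dm theta I y"
          using tf g0S Vopen xiV unfolding top_free_at_def by blast
        have yxi: "y \<noteq> \<xi>" using y g0S by auto
        have yOm: "y \<in> Om" using y by (simp add: V_def)
        define D where "D = (y - \<xi>) \<union> (\<xi> - y)"
        have "D \<noteq> {}" using yxi by (auto simp: D_def)
        then obtain d0 where "d0 \<in> D" by auto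
        then obtain d where d: "d \<in> D" and dmin: "\<And>z. z \<in> D \<Longrightarrow> length d \<le> length z"
          using ex_has_least_nat[of "\<lambda>z. z \<in> D" d0 length] by blast
        have dI: "d \<in> I" using d OmI[OF xi] OmI[OF yOm] by (auto simp: D_def)
        have "d \<notin> F" using d y(1) by (auto simp: D_def V_def)
        then have dM: "M < length d" using dI by (auto simp: F_def)
        define B where "B = tl d"
        have dB: "d = [hd d] @ B" using dM by (cases d) (auto simp: B_def)
        have Bd: "B = drop 1 d" by (simp add: B_def drop_Suc)
        have B: "B \<in> \<xi>" "B \<in> y"
        proof -
          have "B \<in> \<xi> \<or> B \<in> y" using d Omega_D(3)[of _ E00 E01 E1 r s C] xi yOm
            unfolding Bd D_def Om_def by blast
          moreover have "B \<notin> D" using dmin[of B] dM by (auto simp: B_def)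
          ultimately show "B \<in> \<xi>" "B \<in> y" by (auto simp: D_def)
        qed
        have lenB: "M \<le> length B" using dM by (simp add: B_def)
        define y' where "y' = (\<xi> - cone B) \<union> (y \<inter> cone B)"
        have y'Om: "y' \<in> Om" using splice[of \<xi> E00 E01 E1 r s C y B] xi yOm B
          by (simp add: y'_def Om_def)
        have mem: "w \<in> y' \<longleftrightarrow> (if w \<in> cone B then w \<in> y else w \<in> \<xi>)" for w
          by (auto simp: y'_def)
        have "y' \<in> V" using y'Om y(1) by (auto simp: V_def mem)
        then have y'U: "y' \<in> U" using VU by auto
        have dc: "d \<in> cone B" unfolding cone_def using dB by blast
        have "d \<in> y' \<longleftrightarrow> d \<in> y" using dc mem by simp
        then have dD': "d \<in> (y' - \<xi>) \<union> (\<xi> - y')" using d unfolding D_def by blast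
        have "w \<notin> cone B \<Longrightarrow> (w \<in> y' \<longleftrightarrow> w \<in> \<xi>)" for w using mem by simp
        then have D'c: "(y' - \<xi>) \<union> (\<xi> - y') \<subseteq> cone B" by blast
        have "gs \<inter> Stab dm theta I y' = {}"
        proof (rule ccontr)
          assume "gs \<inter> Stab dm theta I y' \<noteq> {}"
          then obtain g where g: "g \<in> gs" "g \<in> Stab dm theta I y'" by auto
          have gx: "g \<in> Stab dm theta I \<xi>" using g gs by auto
          have rg: "reduced g" using g by (auto simp: Stab_def I_def free_group_def)
          have gn: "g \<noteq> []" using g gs by auto
          have thy: "theta g y' = y'" and thx: "theta g \<xi> = \<xi>" using g gx by (auto simp: Stab_def)
          show False
          proof (rule no_common[of y' E1 \<xi> g B])
            show "y' \<subseteq> free_group E1" using OmI[OF y'Om] by (simp add: I_def)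
            show "\<xi> \<subseteq> free_group E1" using OmI[OF xi] by (simp add: I_def)
            show "\<And>x. x \<in> y' \<Longrightarrow> wmult x (winv g) \<in> y' \<and> wmult x g \<in> y'"
              using theta_closed[OF rg _ thy] OmI[OF y'Om] by (auto simp: I_def)
            show "\<And>x. x \<in> \<xi> \<Longrightarrow> wmult x (winv g) \<in> \<xi> \<and> wmult x g \<in> \<xi>"
              using theta_closed[OF rg _ thx] OmI[OF xi] by (auto simp: I_def)
            show "(y' - \<xi>) \<union> (\<xi> - y') \<subseteq> cone B" by (rule D'c)
            show "(y' - \<xi>) \<union> (\<xi> - y') \<noteq> {}" using dD' by auto
            show "reduced g" by (rule rg)
            show "g \<noteq> []" by (rule gn)
            show "length g < length B" using gM[OF g(1)] lenB by simp
          qed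
        qed
        then show ?thesis using y'U by blast
      qed
    qed
  qed
qed


end
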